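(* Let $\mathcal{X}$ be a finite-dimensional complex Hilbert space and let $\mathcal{Y}$ be an isometric copy of $\mathcal{X}$. For $\mathcal{P},\mathcal{Q}\in\mathcal{D}(\mathcal{X})$ define $$\mathrm{qW}(\mathcal{P},\mathcal{Q}) := \min_{\pi} \operatorname{Tr}(\pi C)\quad\text{s.t. } \operatorname{Tr}_{\mathcal{Y}}(\pi)=\mathcal{P},\ \operatorname{Tr}_{\mathcal{X}}(\pi)=\mathcal{Q},\ \pi\in\mathcal{D}(\mathcal{X}\otimes\mathcal{Y}),$$ where $C=\frac{1}{2}(\mathrm{I}_{\mathcal{X}\otimes\mathcal{Y}}-\mathrm{SWAP})$. Then $\mathrm{qW}(\cdot,\cdot)$ is a semimetric on $\mathcal{D}(\mathcal{X})$, i.e., for all $\mathcal{P},\mathcal{Q}\in\mathcal{D}(\mathcal{X})$: (1) $\mathrm{qW}(\mathcal{P},\mathcal{Q})\ge 0$; (2) $\mathrm{qW}(\mathcal{P},\mathcal{Q})=\mathrm{qW}(\mathcal{Q},\mathcal{P})$; (3) $\mathrm{qW}(\mathcal{P},\mathcal{Q})=0$ if and only if $\mathcal{P}=\mathcal{Q}$.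
   Context: $\mathcal{D}(\mathcal{Z})$ denotes the set of density operators on a finite-dimensional complex Hilbert space $\mathcal{Z}$, i.e. positive semidefinite operators of trace one. $\operatorname{Tr}_{\mathcal{Y}}$ and $\operatorname{Tr}_{\mathcal{X}}$ denote the partial traces over $\mathcal{Y}$ and $\mathcal{X}$ respectively. Identifying $\mathcal{Y}$ with $\mathcal{X}$, $\mathrm{SWAP}$ is the linear operator on $\mathcal{X}\otimes\mathcal{Y}$ with $\mathrm{SWAP}(x\otimes y)=y\otimes x$ for all $x\in\mathcal{X},y\in\mathcal{Y}$, and $\mathrm{I}_{\mathcal{X}\otimes\mathcal{Y}}$ is the identity. *)

theory Defs
  imports "HOL-Analysis.Analysis"
begin

text \<open>Operators on a finite-dimensional complex Hilbert space with orthonormal basis indexed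
  by the finite type 'a are matrices of type complex^'a^'a.  The space X has basis indexed by 'n;
  Y is an isometric copy of X (same index type); X \<otimes> Y has product basis e_i \<otimes> e_j
  indexed by pairs (i,j) :: 'n \<times> 'n.\<close>

definition mtrace :: "complex^'a^'a \<Rightarrow> complex" where
  "mtrace A = (\<Sum>i\<in>UNIV. A $ i $ i)"

definition psd :: "complex^'a^'a \<Rightarrow> bool" where
  "psd A \<longleftrightarrow> (\<forall>v::complex^'a.
      (\<Sum>i\<in>UNIV. \<Sum>j\<in>UNIV. cnj (v $ i) * A $ i $ j * v $ j) \<in> \<real> \<and>
      0 \<le> Re (\<Sum>i\<in>UNIV. \<Sum>j\<in>UNIV. cnj (v $ i) * A $ i $ j * v $ j))"

definition density :: "complex^'a^'a \<Rightarrow> bool" where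
  "density A \<longleftrightarrow> psd A \<and> mtrace A = 1"

definition ptrace_Y :: "complex^('n::finite\<times>'n)^('n\<times>'n) \<Rightarrow> complex^'n^'n" where
  "ptrace_Y M = (\<chi> i k. \<Sum>j\<in>UNIV. M $ (i,j) $ (k,j))"

definition ptrace_X :: "complex^('n::finite\<times>'n)^('n\<times>'n) \<Rightarrow> complex^'n^'n" where
  "ptrace_X M = (\<chi> j l. \<Sum>i\<in>UNIV. M $ (i,j) $ (i,l))"

text \<open>SWAP (x \<otimes> y) = y \<otimes> x, i.e. SWAP (e_k \<otimes> e_l) = e_l \<otimes> e_k.\<close>
definition SWAP :: "complex^('n::finite\<times>'n)^('n\<times>'n)" where
  "SWAP = (\<chi> a b. if fst a = snd b \<and> snd a = fst b then 1 else 0)"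

definition cost :: "complex^('n::finite\<times>'n)^('n\<times>'n)" where
  "cost = (\<chi> a b. (1/2) * ((mat 1 :: complex^('n\<times>'n)^('n\<times>'n)) $ a $ b - SWAP $ a $ b))"

text \<open>Quantum Wasserstein semidistance: the minimum (infimum; attained by compactness)
  of Tr(\<pi> C) over couplings \<pi>.  Tr(\<pi> C) is real for density \<pi>, so we take its real part.\<close>
definition qW :: "complex^'n::finite^'n \<Rightarrow> complex^'n^'n \<Rightarrow> real" where
  "qW P Q = Inf {Re (mtrace (\<pi> ** cost)) | \<pi>.
      density \<pi> \<and> ptrace_Y \<pi> = P \<and> ptrace_X \<pi> = Q}"

end

theory Submission
  imports Defs
begin

definition bf :: "complex^'a^'a \<Rightarrow> complex^'a \<Rightarrow> complex^'a \<Rightarrow> complex" where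
  "bf A x y = (\<Sum>i\<in>UNIV. \<Sum>j\<in>UNIV. cnj (x $ i) * A $ i $ j * y $ j)"

lemma psd_bf: "psd A \<longleftrightarrow> (\<forall>v. bf A v v \<in> \<real> \<and> 0 \<le> Re (bf A v v))"
  unfolding psd_def bf_def by simp

lemma bf_add_left: "bf A (x + y) z = bf A x z + bf A y z"
  unfolding bf_def by (simp add: sum.distrib[symmetric] algebra_simps)
lemma bf_add_right: "bf A x (y + z) = bf A x y + bf A x z"
  unfolding bf_def by (simp add: sum.distrib[symmetric] algebra_simps)
lemma bf_diff_left: "bf A (x - y) z = bf A x z - bf A y z"
  unfolding bf_def by (simp add: sum_subtractf[symmetric] algebra_simps)
lemma bf_diff_right: "bf A x (y - z) = bf A x y - bf A x z"
  unfolding bf_def by (simp add: sum_subtractf[symmetric] algebra_simps)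
lemma bf_scale_left: "bf A (c *s x) y = cnj c * bf A x y"
  unfolding bf_def by (simp add: sum_distrib_left algebra_simps)
lemma bf_scale_right: "bf A x (c *s y) = c * bf A x y"
  unfolding bf_def by (simp add: sum_distrib_left algebra_simps)
lemma bf_axis: "bf A (axis a 1) (axis b 1) = A $ a $ b"
proof -
  have m: "\<And>(x::complex) P. x * (if P then 1 else 0) = (if P then x else 0)" by simp
  have "bf A (axis a 1) (axis b 1) = (\<Sum>i\<in>UNIV. (if i = a then (\<Sum>j\<in>UNIV. if j = b then A$i$j else 0) else 0))"
    unfolding bf_def axis_def by (rule sum.cong) (auto simp: m)
  thus ?thesis by simp
qed

lemmas bf_simps = bf_add_left bf_add_right bf_diff_left bf_diff_right bf_scale_left bf_scale_right bf_axis

lemma psd_real: "psd A \<Longrightarrow> bf A v v = complex_of_real (Re (bf A v v))"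
  unfolding psd_bf by (metis Reals_cases Re_complex_of_real)

lemma psd_diag: "psd A \<Longrightarrow> A $ a $ a = complex_of_real (Re (A $ a $ a)) \<and> 0 \<le> Re (A $ a $ a)"
  using psd_real[of A "axis a 1"] psd_bf[of A] by (metis bf_axis)

lemma psd_herm:
  assumes "psd A" shows "A $ j $ i = cnj (A $ i $ j)"
proof -
  have r1: "bf A (axis i 1 + axis j 1) (axis i 1 + axis j 1) \<in> \<real>" using assms psd_bf by blast
  have r2: "bf A (axis i 1 + \<i> *s axis j 1) (axis i 1 + \<i> *s axis j 1) \<in> \<real>" using assms psd_bf by blast
  have di: "Im (A $ i $ i) = 0" "Im (A $ j $ j) = 0" using psd_diag[OF assms, of i] psd_diag[OF assms, of j]
    by (metis Im_complex_of_real)+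
  from r1 have "Im (A$i$i + A$i$j + A$j$i + A$j$j) = 0" by (simp add: bf_simps complex_is_Real_iff algebra_simps)
  hence a: "Im (A$i$j) + Im (A$j$i) = 0" using di by simp
  from r2 have "Im (A$i$i + \<i> * A$i$j - \<i> * A$j$i + A$j$j) = 0" by (simp add: bf_simps complex_is_Real_iff algebra_simps)
  hence b: "Re (A$i$j) - Re (A$j$i) = 0" using di by simp
  have "Re (A$j$i) = Re (A$i$j)" "Im (A$j$i) = - Im (A$i$j)" using a b by linarith+
  moreover have "Re (cnj (A$i$j)) = Re (A$i$j)" "Im (cnj (A$i$j)) = - Im (A$i$j)" by simp_all
  ultimately show ?thesis by (metis complex_eqI)
qed

lemma psd_herm': assumes "psd A" shows "cnj (A $ j $ i) = A $ i $ j"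
proof -
  have "A $ i $ j = cnj (A $ j $ i)" by (rule psd_herm[OF assms])
  thus ?thesis by (rule sym)
qed

lemma bf_conj: assumes "psd A" shows "bf A y x = cnj (bf A x y)"
proof -
  have "bf A y x = (\<Sum>i\<in>UNIV. \<Sum>j\<in>UNIV. cnj (cnj (x $ j) * A $ j $ i * y $ i))"
    unfolding bf_def by (intro sum.cong refl) (simp add: psd_herm'[OF assms] mult_ac)
  also have "\<dots> = (\<Sum>j\<in>UNIV. \<Sum>i\<in>UNIV. cnj (cnj (x $ j) * A $ j $ i * y $ i))"
    by (rule sum.swap)
  also have "\<dots> = cnj (bf A x y)" unfolding bf_def cnj_sum ..
  finally show ?thesis .
qed

lemma bf_cs:
  assumes A: "psd A"
  shows "(cmod (bf A x y))^2 \<le> Re (bf A x x) * Re (bf A y y)"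
proof -
  define b where "b = bf A x y"
  define qx where "qx = Re (bf A x x)"
  define qy where "qy = Re (bf A y y)"
  have hyx: "bf A y x = cnj b" unfolding b_def by (rule bf_conj[OF A])
  have hx: "bf A x x = complex_of_real qx" unfolding qx_def by (rule psd_real[OF A])
  have hy: "bf A y y = complex_of_real qy" unfolding qy_def by (rule psd_real[OF A])
  have qy0: "0 \<le> qy" using A unfolding psd_bf qy_def by blast
  have key: "0 \<le> qx - 2*t*(cmod b)^2 + t^2 * (cmod b)^2 * qy" for t :: real
  proof -
    define z where "z = - (complex_of_real t * cnj b)"
    have cb: "cmod b * cmod b = Re b * Re b + Im b * Im b" using cmod_power2[of b] by (simp add: power2_eq_square)
    have "0 \<le> Re (bf A (x + z *s y) (x + z *s y))" using A unfolding psd_bf by blast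
    also have "bf A (x + z *s y) (x + z *s y) = bf A x x + z * bf A x y + cnj z * bf A y x + cnj z * z * bf A y y"
      by (simp add: bf_simps algebra_simps)
    also have "Re \<dots> = qx - 2*t*(cmod b)^2 + t^2 * (cmod b)^2 * qy"
      unfolding hyx hx hy z_def b_def[symmetric] by (simp add: cb algebra_simps power2_eq_square)
    finally show ?thesis .
  qed
  show ?thesis
  proof (cases "qy = 0")
    case True
    have "cmod b = 0"
    proof (rule ccontr)
      assume "cmod b \<noteq> 0"
      hence p: "(cmod b)^2 > 0" by simp
      have "0 \<le> qx - 2*((qx+1)/(2*(cmod b)^2))*(cmod b)^2" using key[of "(qx+1)/(2*(cmod b)^2)"] True by simp
      also have "\<dots> = -1" using p by (simp add: field_simps)
      finally show False by simp
    qed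
    thus ?thesis using True unfolding b_def qy_def by simp
  next
    case False
    hence p: "qy > 0" using qy0 by simp
    have "0 \<le> qx - 2*(1/qy)*(cmod b)^2 + (1/qy)^2 * (cmod b)^2 * qy" by (rule key)
    also have "\<dots> = (qx * qy - (cmod b)^2) / qy" using p by (simp add: field_simps power2_eq_square)
    finally have "0 \<le> qx * qy - (cmod b)^2" using p by (simp add: divide_nonneg_pos zero_le_divide_iff)
    thus ?thesis unfolding b_def qx_def qy_def by simp
  qed
qed

lemma bf_cs': assumes "psd A" shows "cmod (bf A x y) \<le> sqrt (Re (bf A x x) * Re (bf A y y))"
  using bf_cs[OF assms, of x y] real_le_rsqrt by blast

lemma psd_diag0: assumes "psd A" "A $ i $ i = 0" shows "A $ i $ j = 0"
  using bf_cs[OF assms(1), of "axis i 1" "axis j 1"] assms(2) by (simp add: bf_axis)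

definition out :: "complex^'a \<Rightarrow> complex^'a^'a" where
  "out w = (\<chi> i j. w $ i * cnj (w $ j))"

lemma bf_out: "bf (out u) v v = complex_of_real ((cmod (\<Sum>k\<in>UNIV. cnj (v $ k) * u $ k))^2)"
proof -
  define s where "s = (\<Sum>k\<in>UNIV. cnj (v $ k) * u $ k)"
  have "bf (out u) v v = s * cnj s"
    unfolding bf_def out_def s_def cnj_sum sum_product by (simp add: algebra_simps)
  also have "\<dots> = complex_of_real ((cmod s)^2)" by (rule complex_norm_square[symmetric])
  finally show ?thesis unfolding s_def .
qed

lemma psd_out: "psd (out u)"
  unfolding psd_bf bf_out by simp

lemma bf_mat_add: "bf (A + B) x y = bf A x y + bf B x y"
  unfolding bf_def by (simp add: sum.distrib[symmetric] algebra_simps)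
lemma bf_mat_diff: "bf (A - B) x y = bf A x y - bf B x y"
  unfolding bf_def by (simp add: sum_subtractf[symmetric] algebra_simps)
definition msc :: "complex \<Rightarrow> complex^'a^'a \<Rightarrow> complex^'a^'a" where
  "msc c A = (\<chi> i j. c * A $ i $ j)"
lemma bf_mat_scale: "bf (msc c A) x y = c * bf A x y"
  unfolding bf_def msc_def by (simp add: sum_distrib_left algebra_simps)
lemma bf_mat_zero: "bf 0 x y = 0"
  unfolding bf_def by simp
lemma bf_mat_sum: "bf (\<Sum>r\<in>S. M r) x y = (\<Sum>r\<in>S. bf (M r) x y)"
  by (induction S rule: infinite_finite_induct) (simp_all add: bf_mat_zero bf_mat_add)

lemma psd_add: "psd A \<Longrightarrow> psd B \<Longrightarrow> psd (A + B)"
  unfolding psd_bf bf_mat_add by auto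
lemma psd_zero: "psd 0"
  unfolding psd_bf bf_mat_zero by auto
lemma psd_sum: "(\<And>r. r \<in> S \<Longrightarrow> psd (M r)) \<Longrightarrow> psd (\<Sum>r\<in>S. M r)"
  by (induction S rule: infinite_finite_induct) (auto simp: psd_zero psd_add)
lemma psd_scale: "psd A \<Longrightarrow> 0 \<le> c \<Longrightarrow> psd (msc (complex_of_real c) A)"
  unfolding psd_bf bf_mat_scale
  by (metis Re_complex_of_real Reals_mult Reals_of_real mult_nonneg_nonneg of_real_mult psd_real[unfolded psd_bf] psd_bf)

lemma bf_axis_right: "bf A v (axis i 1) = (\<Sum>k\<in>UNIV. cnj (v $ k) * A $ k $ i)"
  unfolding bf_def axis_def
  by (rule sum.cong) (auto simp: if_distrib cong: if_cong)

lemma out_zero: "out 0 = 0"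
  unfolding out_def by (simp add: vec_eq_iff)

lemma decomp_aux:
  fixes S :: "'n::finite set" and A :: "complex^'n^'n"
  shows "finite S \<Longrightarrow> psd A \<Longrightarrow> (\<forall>i. i \<notin> S \<longrightarrow> A $ i $ i = 0) \<Longrightarrow> \<exists>w. A = (\<Sum>r\<in>S. out (w r))"
proof (induction S arbitrary: A rule: finite_induct)
  case empty
  have "\<forall>i j. A $ i $ j = 0" using psd_diag0[OF empty(1)] empty(2) by blast
  hence "A = 0" by (simp add: vec_eq_iff)
  thus ?case by (intro exI[of _ "\<lambda>_. 0"]) simp
next
  case (insert i S)
  show ?case
  proof (cases "A $ i $ i = 0")
    case True
    have "\<forall>k. k \<notin> S \<longrightarrow> A $ k $ k = 0" using insert(5) True by auto
    then obtain w where w: "A = (\<Sum>r\<in>S. out (w r))" using insert(3)[OF insert(4)] by blast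
    have e: "(\<Sum>r\<in>S. out ((w(i:=0)) r)) = (\<Sum>r\<in>S. out (w r))" using insert(2) by (intro sum.cong) auto
    have "A = (\<Sum>r\<in>insert i S. out ((w(i := 0)) r))"
      using w by (simp only: sum.insert[OF insert(1,2)] e) (simp add: out_zero)
    thus ?thesis by blast
  next
    case False
    define d where "d = Re (A $ i $ i)"
    have Aii: "A $ i $ i = complex_of_real d" unfolding d_def using psd_diag[OF insert(4)] by blast
    have dne: "d \<noteq> 0" using False Aii by auto
    have "0 \<le> d" using psd_diag[OF insert(4), of i] unfolding d_def by blast
    hence d0: "d > 0" using dne by linarith
    define u where "u = (\<chi> k. A $ k $ i / complex_of_real (sqrt d))"
    define A' where "A' = A - out u"
    have outkk: "out u $ k $ l = A $ k $ i * A $ i $ l / complex_of_real d" for k l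
    proof -
      define c where "c = complex_of_real (sqrt d)"
      have sq: "sqrt d * sqrt d = d" using d0 by simp
      have cc: "c * c = complex_of_real d" unfolding c_def of_real_mult[symmetric] sq ..
      have c0: "c \<noteq> 0" using cc dne by auto
      have uk: "u $ k = A $ k $ i / c" for k unfolding u_def c_def by simp
      have "cnj c = c" unfolding c_def by simp
      hence ul: "cnj (u $ l) = A $ i $ l / c" unfolding uk using psd_herm'[OF insert(4), of l i] by simp
      have "out u $ k $ l = u $ k * cnj (u $ l)" unfolding out_def by simp
      also have "\<dots> = (A $ k $ i / c) * (A $ i $ l / c)" by (subst ul) (simp only: uk)
      also have "\<dots> = A $ k $ i * A $ i $ l / (c * c)" by simp
      finally show ?thesis unfolding cc .
    qed
    have psdA': "psd A'"
      unfolding psd_bf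
    proof
      fix v
      define s where "s = (\<Sum>k\<in>UNIV. cnj (v $ k) * A $ k $ i)"
      have bu: "bf (out u) v v = complex_of_real ((cmod s)^2 / d)"
      proof -
        have "(\<Sum>k\<in>UNIV. cnj (v $ k) * u $ k) = s / complex_of_real (sqrt d)"
          unfolding u_def s_def by (simp add: sum_divide_distrib)
        hence "bf (out u) v v = complex_of_real ((cmod s / sqrt d)^2)"
          unfolding bf_out using d0 by (simp add: norm_divide)
        thus ?thesis using d0 by (simp add: power_divide)
      qed
      have cs: "(cmod s)^2 \<le> Re (bf A v v) * d"
        using bf_cs[OF insert(4), of v "axis i 1"] by (simp only: bf_axis bf_axis_right[of A v] s_def d_def)
      have bv: "bf A v v = complex_of_real (Re (bf A v v))" by (rule psd_real[OF insert(4)])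
      have "bf A' v v = complex_of_real (Re (bf A v v) - (cmod s)^2 / d)"
        unfolding A'_def bf_mat_diff bu by (subst bv) simp
      moreover have "0 \<le> Re (bf A v v) - (cmod s)^2 / d"
        using cs d0 by (simp add: field_simps)
      ultimately show "bf A' v v \<in> \<real> \<and> 0 \<le> Re (bf A' v v)" by simp
    qed
    have diagA': "\<forall>k. k \<notin> S \<longrightarrow> A' $ k $ k = 0"
    proof (intro allI impI)
      fix k assume k: "k \<notin> S"
      show "A' $ k $ k = 0"
      proof (cases "k = i")
        case True
        thus ?thesis unfolding A'_def using outkk[of i i] Aii d0 by simp
      next
        case False
        hence "A $ k $ k = 0" using insert(5) k by simp
        hence "A $ k $ i = 0" by (rule psd_diag0[OF insert(4)])
        thus ?thesis unfolding A'_def using outkk[of k k] \<open>A $ k $ k = 0\<close> by simp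
      qed
    qed
    obtain w where w: "A' = (\<Sum>r\<in>S. out (w r))" using insert(3)[OF psdA' diagA'] by blast
    have e: "(\<Sum>r\<in>S. out ((w(i:=u)) r)) = (\<Sum>r\<in>S. out (w r))" using insert(2) by (intro sum.cong) auto
    have "out u + A' = (\<Sum>r\<in>insert i S. out ((w(i := u)) r))"
      using w by (simp only: sum.insert[OF insert(1,2)] e) simp
    moreover have "A = out u + A'" unfolding A'_def by simp
    ultimately show ?thesis by metis
  qed
qed

lemma decomp: "psd (A::complex^'n::finite^'n) \<Longrightarrow> \<exists>w::'n \<Rightarrow> complex^'n. A = (\<Sum>r\<in>UNIV. out (w r))"
  using decomp_aux[of UNIV A] by simp

lemma mult_if01: "(x::complex) * (if P then 1 else 0) = (if P then x else 0)" by simp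

definition sw :: "'n \<times> 'n \<Rightarrow> 'n \<times> 'n" where "sw p = (snd p, fst p)"

lemma sw_sw[simp]: "sw (sw p) = p" unfolding sw_def by simp

lemma sum_sw: "(\<Sum>a\<in>UNIV. f (sw a)) = (\<Sum>a\<in>(UNIV::('n::finite\<times>'n) set). f a)"
  by (rule sum.reindex_bij_witness[of _ sw sw]) auto

lemma sum_pair: "(\<Sum>a\<in>(UNIV::('n::finite\<times>'n) set). f a) = (\<Sum>i\<in>UNIV. \<Sum>j\<in>UNIV. f (i,j))"
  using sum.cartesian_product[of "\<lambda>i j. f (i,j)" UNIV UNIV] by (simp add: UNIV_Times_UNIV)

lemma cost_entry: "(cost :: complex^('n::finite\<times>'n)^('n\<times>'n)) $ b $ a =
    (1/2) * ((if b = a then 1 else 0) - (if b = sw a then 1 else 0))"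
  unfolding cost_def SWAP_def mat_def sw_def by (cases a; cases b) auto

lemma half_split: "(\<Sum>b\<in>UNIV. (f b::complex) * ((1/2) * (A b - B b))) = (1/2) * ((\<Sum>b\<in>UNIV. f b * A b) - (\<Sum>b\<in>UNIV. f b * B b))"
proof -
  have "(\<Sum>b\<in>UNIV. f b * ((1/2) * (A b - B b))) = (\<Sum>b\<in>UNIV. (1/2) * (f b * A b) - (1/2) * (f b * B b))"
    by (rule sum.cong) (simp_all add: field_simps)
  also have "\<dots> = (1/2) * (\<Sum>b\<in>UNIV. f b * A b) - (1/2) * (\<Sum>b\<in>UNIV. f b * B b)"
    by (simp only: sum_subtractf sum_distrib_left)
  finally show ?thesis by (simp only: right_diff_distrib)
qed

lemma cost_formula: fixes \<pi> :: "complex^('n::finite\<times>'n)^('n\<times>'n)"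
  shows "mtrace (\<pi> ** cost) = (1/2) * ((\<Sum>a\<in>UNIV. \<pi> $ a $ a) - (\<Sum>a\<in>UNIV. \<pi> $ a $ sw a))"
proof -
  have "mtrace (\<pi> ** cost) = (\<Sum>a\<in>UNIV. \<Sum>b\<in>UNIV. \<pi> $ a $ b * ((1/2) * ((if b = a then 1 else 0) - (if b = sw a then 1 else 0))))"
    unfolding mtrace_def matrix_matrix_mult_def cost_entry by simp
  also have "\<dots> = (\<Sum>a\<in>UNIV. (1/2) * (\<pi> $ a $ a - \<pi> $ a $ sw a))"
  proof (rule sum.cong)
    fix a
    note gen = half_split
    have d: "\<And>c. (\<Sum>b\<in>UNIV. \<pi> $ a $ b * (if b = c then 1 else 0)) = \<pi> $ a $ c"
      by (simp add: mult_if01 sum.delta')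
    show "(\<Sum>b\<in>UNIV. \<pi> $ a $ b * ((1/2) * ((if b = a then 1 else 0) - (if b = sw a then 1 else 0)))) = (1/2) * (\<pi> $ a $ a - \<pi> $ a $ sw a)"
      unfolding gen d ..
  qed simp
  also have "\<dots> = (1/2) * ((\<Sum>a\<in>UNIV. \<pi> $ a $ a) - (\<Sum>a\<in>UNIV. \<pi> $ a $ sw a))"
    by (simp only: sum_distrib_left[symmetric] sum_subtractf)
  finally show ?thesis .
qed

definition wv :: "'n::finite \<times> 'n \<Rightarrow> complex^('n\<times>'n)" where
  "wv a = (1/2) *s (axis a 1 - axis (sw a) 1)"
definition sv :: "'n::finite \<times> 'n \<Rightarrow> complex^('n\<times>'n)" where
  "sv a = (1/2) *s (axis a 1 + axis (sw a) 1)"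

lemma cost_eq: fixes \<pi> :: "complex^('n::finite\<times>'n)^('n\<times>'n)"
  shows "mtrace (\<pi> ** cost) = (\<Sum>a\<in>UNIV. bf \<pi> (wv a) (wv a))"
proof -
  have "(\<Sum>a\<in>UNIV. bf \<pi> (wv a) (wv a)) = (1/4) * ((\<Sum>a\<in>UNIV. \<pi> $ a $ a) - (\<Sum>a\<in>UNIV. \<pi> $ a $ sw a)
      - (\<Sum>a\<in>UNIV. \<pi> $ sw a $ a) + (\<Sum>a\<in>UNIV. \<pi> $ sw a $ sw a))"
    unfolding wv_def by (simp add: bf_simps sum_distrib_left sum.distrib sum_subtractf algebra_simps)
  also have "(\<Sum>a\<in>UNIV. \<pi> $ sw a $ a) = (\<Sum>a\<in>UNIV. \<pi> $ a $ sw a)"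
    using sum_sw[of "\<lambda>a. \<pi> $ a $ sw a"] by simp
  also have "(\<Sum>a\<in>UNIV. \<pi> $ sw a $ sw a) = (\<Sum>a\<in>UNIV. \<pi> $ a $ a)"
    using sum_sw[of "\<lambda>a. \<pi> $ a $ a"] by simp
  finally show ?thesis unfolding cost_formula by (simp add: algebra_simps)
qed

lemma cost_nonneg: "psd \<pi> \<Longrightarrow> 0 \<le> Re (mtrace (\<pi> ** cost))"
  unfolding cost_eq Re_sum by (intro sum_nonneg) (auto simp: psd_bf)

lemma wv_le: assumes "psd \<pi>" shows "Re (bf \<pi> (wv a) (wv a)) \<le> Re (mtrace (\<pi> ** cost))"
  unfolding cost_eq Re_sum using assms by (intro member_le_sum) (auto simp: psd_bf)

lemma diag_le: assumes "density \<pi>" shows "Re (\<pi> $ a $ a) \<le> 1"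
proof -
  have "Re (\<pi> $ a $ a) \<le> (\<Sum>b\<in>UNIV. Re (\<pi> $ b $ b))"
    using assms unfolding density_def by (intro member_le_sum) (auto dest: psd_diag)
  also have "\<dots> = 1" using assms unfolding density_def mtrace_def Re_sum[symmetric] by simp
  finally show ?thesis .
qed

lemma sv_le: assumes "density \<pi>" shows "Re (bf \<pi> (sv a) (sv a)) \<le> 1"
proof -
  have p: "psd \<pi>" using assms unfolding density_def by simp
  have "Re (bf \<pi> (sv a) (sv a)) + Re (bf \<pi> (wv a) (wv a)) = (Re (\<pi> $ a $ a) + Re (\<pi> $ sw a $ sw a)) / 2"
    unfolding sv_def wv_def by (simp add: bf_simps algebra_simps)
  moreover have "0 \<le> Re (bf \<pi> (wv a) (wv a))" using p psd_bf by blast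
  ultimately show ?thesis using diag_le[OF assms, of a] diag_le[OF assms, of "sw a"] by argo
qed

lemma entry_bound:
  fixes \<pi> :: "complex^('n::finite\<times>'n)^('n\<times>'n)"
  assumes d: "density \<pi>"
  shows "cmod (ptrace_Y \<pi> $ i $ k - ptrace_X \<pi> $ i $ k) \<le> 4 * real CARD('n) * sqrt (Re (mtrace (\<pi> ** cost)))"
proof -
  have p: "psd \<pi>" using d unfolding density_def by simp
  define \<epsilon> where "\<epsilon> = Re (mtrace (\<pi> ** cost))"
  have tm: "cmod (\<pi> $ (i,j) $ (k,j) - \<pi> $ (j,i) $ (j,k)) \<le> 4 * sqrt \<epsilon>" for j
  proof -
    have e: "\<pi> $ (i,j) $ (k,j) - \<pi> $ (j,i) $ (j,k) = 2 * bf \<pi> (sv (i,j)) (wv (k,j)) + 2 * bf \<pi> (wv (i,j)) (sv (k,j))"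
      unfolding sv_def wv_def sw_def by (simp add: bf_simps algebra_simps)
    have b1: "cmod (bf \<pi> (sv (i,j)) (wv (k,j))) \<le> sqrt \<epsilon>"
    proof -
      have "cmod (bf \<pi> (sv (i,j)) (wv (k,j))) \<le> sqrt (Re (bf \<pi> (sv (i,j)) (sv (i,j))) * Re (bf \<pi> (wv (k,j)) (wv (k,j))))"
        by (rule bf_cs'[OF p])
      also have "\<dots> \<le> sqrt (1 * \<epsilon>)"
        using sv_le[OF d] wv_le[OF p] cost_nonneg[OF p] p unfolding \<epsilon>_def psd_bf
        by (intro real_sqrt_le_mono mult_mono) auto
      finally show ?thesis by simp
    qed
    have b2: "cmod (bf \<pi> (wv (i,j)) (sv (k,j))) \<le> sqrt \<epsilon>"
    proof -
      have "cmod (bf \<pi> (wv (i,j)) (sv (k,j))) \<le> sqrt (Re (bf \<pi> (wv (i,j)) (wv (i,j))) * Re (bf \<pi> (sv (k,j)) (sv (k,j))))"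
        by (rule bf_cs'[OF p])
      also have "\<dots> \<le> sqrt (\<epsilon> * 1)"
        using sv_le[OF d] wv_le[OF p] cost_nonneg[OF p] p unfolding \<epsilon>_def psd_bf
        by (intro real_sqrt_le_mono mult_mono) auto
      finally show ?thesis by simp
    qed
    have "cmod (\<pi> $ (i,j) $ (k,j) - \<pi> $ (j,i) $ (j,k)) \<le> 2 * cmod (bf \<pi> (sv (i,j)) (wv (k,j))) + 2 * cmod (bf \<pi> (wv (i,j)) (sv (k,j)))"
      unfolding e by (rule order_trans[OF norm_triangle_ineq]) (simp add: norm_mult)
    thus ?thesis using b1 b2 by linarith
  qed
  have "ptrace_Y \<pi> $ i $ k - ptrace_X \<pi> $ i $ k = (\<Sum>j\<in>UNIV. \<pi> $ (i,j) $ (k,j) - \<pi> $ (j,i) $ (j,k))"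
    unfolding ptrace_Y_def ptrace_X_def by (simp add: sum_subtractf)
  hence "cmod (ptrace_Y \<pi> $ i $ k - ptrace_X \<pi> $ i $ k) \<le> (\<Sum>j\<in>(UNIV::'n set). 4 * sqrt \<epsilon>)"
    using tm by (metis (no_types, lifting) norm_sum order_trans sum_mono)
  thus ?thesis unfolding \<epsilon>_def by simp
qed

definition kr :: "complex^'n \<Rightarrow> complex^'n \<Rightarrow> complex^('n\<times>'n)" where
  "kr x y = (\<chi> a. x $ fst a * y $ snd a)"

definition prodc :: "complex^'n^'n \<Rightarrow> complex^'n^'n \<Rightarrow> complex^('n\<times>'n)^('n\<times>'n)" where
  "prodc P Q = (\<chi> a b. P $ fst a $ fst b * Q $ snd a $ snd b)"

lemma mtrace_ptrace: "mtrace (\<pi> :: complex^('n::finite\<times>'n)^('n\<times>'n)) = mtrace (ptrace_Y \<pi>)"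
  unfolding mtrace_def ptrace_Y_def by (simp add: sum_pair)

lemma psd_prodc:
  fixes P Q :: "complex^'n::finite^'n"
  assumes "psd P" "psd Q" shows "psd (prodc P Q)"
proof -
  obtain w where w: "P = (\<Sum>r::'n\<in>UNIV. out (w r))" using decomp[OF assms(1)] by blast
  obtain u where u: "Q = (\<Sum>r::'n\<in>UNIV. out (u r))" using decomp[OF assms(2)] by blast
  have "prodc P Q = (\<Sum>r\<in>UNIV. \<Sum>s\<in>UNIV. out (kr (w r) (u s)))"
    unfolding vec_eq_iff
  proof (intro allI)
    fix a b :: "'n \<times> 'n"
    have "prodc P Q $ a $ b = (\<Sum>r\<in>UNIV. w r $ fst a * cnj (w r $ fst b)) * (\<Sum>s\<in>UNIV. u s $ snd a * cnj (u s $ snd b))"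
      unfolding prodc_def w u out_def by simp
    also have "\<dots> = (\<Sum>r\<in>UNIV. \<Sum>s\<in>UNIV. out (kr (w r) (u s)) $ a $ b)"
      unfolding sum_product out_def kr_def by (simp add: mult_ac)
    finally show "prodc P Q $ a $ b = (\<Sum>r\<in>UNIV. \<Sum>s\<in>UNIV. out (kr (w r) (u s))) $ a $ b" by simp
  qed
  thus ?thesis by (simp add: psd_sum psd_out)
qed

lemma ptrace_prodc:
  fixes P Q :: "complex^'n::finite^'n"
  shows "ptrace_Y (prodc P Q) = msc (mtrace Q) P" "ptrace_X (prodc P Q) = msc (mtrace P) Q"
  unfolding ptrace_Y_def ptrace_X_def prodc_def mtrace_def vec_eq_iff msc_def
  by (simp_all add: sum_distrib_left sum_distrib_right mult_ac)

lemma prodc_coupling: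
  fixes P Q :: "complex^'n::finite^'n"
  assumes "density P" "density Q"
  shows "density (prodc P Q) \<and> ptrace_Y (prodc P Q) = P \<and> ptrace_X (prodc P Q) = Q"
proof -
  have m: "ptrace_Y (prodc P Q) = P" "ptrace_X (prodc P Q) = Q"
    using assms unfolding density_def ptrace_prodc msc_def by (simp_all add: vec_eq_iff)
  have "mtrace (prodc P Q) = 1" unfolding mtrace_ptrace m using assms density_def by blast
  thus ?thesis using m psd_prodc assms unfolding density_def by blast
qed

definition swp :: "complex^('n::finite\<times>'n)^('n\<times>'n) \<Rightarrow> complex^('n\<times>'n)^('n\<times>'n)" where
  "swp \<pi> = (\<chi> a b. \<pi> $ sw a $ sw b)"

lemma swp_coupling:
  fixes \<pi> :: "complex^('n::finite\<times>'n)^('n\<times>'n)"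
  assumes "density \<pi>"
  shows "density (swp \<pi>) \<and> ptrace_Y (swp \<pi>) = ptrace_X \<pi> \<and> ptrace_X (swp \<pi>) = ptrace_Y \<pi>
    \<and> mtrace (swp \<pi> ** cost) = mtrace (\<pi> ** cost)"
proof -
  have psd: "psd (swp \<pi>)"
    unfolding psd_bf
  proof
    fix v :: "complex^('n\<times>'n)"
    define v' where "v' = (\<chi> a. v $ sw a)"
    have "bf \<pi> v' v' = (\<Sum>a\<in>UNIV. \<Sum>b\<in>UNIV. cnj (v $ sw a) * \<pi> $ a $ b * v $ sw b)"
      unfolding bf_def v'_def by simp
    also have "\<dots> = (\<Sum>a\<in>UNIV. \<Sum>b\<in>UNIV. cnj (v $ a) * \<pi> $ sw a $ b * v $ sw b)"
      using sum_sw[of "\<lambda>a. \<Sum>b\<in>UNIV. cnj (v $ sw a) * \<pi> $ a $ b * v $ sw b"] by simp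
    also have "\<dots> = (\<Sum>a\<in>UNIV. \<Sum>b\<in>UNIV. cnj (v $ a) * \<pi> $ sw a $ sw b * v $ b)"
      by (rule sum.cong[OF refl]) (use sum_sw[of "\<lambda>b. cnj (v $ _) * \<pi> $ sw _ $ b * v $ sw b"] in simp)
    also have "\<dots> = bf (swp \<pi>) v v" unfolding bf_def swp_def by simp
    finally have "bf (swp \<pi>) v v = bf \<pi> v' v'" by simp
    thus "bf (swp \<pi>) v v \<in> \<real> \<and> 0 \<le> Re (bf (swp \<pi>) v v)" using assms unfolding density_def psd_bf by simp
  qed
  have pY: "ptrace_Y (swp \<pi>) = ptrace_X \<pi>"
    unfolding ptrace_Y_def ptrace_X_def swp_def sw_def by simp
  have pX: "ptrace_X (swp \<pi>) = ptrace_Y \<pi>"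
    unfolding ptrace_Y_def ptrace_X_def swp_def sw_def by simp
  have tr: "mtrace (swp \<pi>) = 1"
    using assms unfolding density_def mtrace_def swp_def using sum_sw[of "\<lambda>a. \<pi> $ a $ a"] by simp
  have c1: "(\<Sum>a\<in>UNIV. swp \<pi> $ a $ a) = (\<Sum>a\<in>UNIV. \<pi> $ a $ a)"
    unfolding swp_def using sum_sw[of "\<lambda>a. \<pi> $ a $ a"] by simp
  have c2: "(\<Sum>a\<in>UNIV. swp \<pi> $ a $ sw a) = (\<Sum>a\<in>UNIV. \<pi> $ a $ sw a)"
    unfolding swp_def using sum_sw[of "\<lambda>a. \<pi> $ a $ sw a"] by simp
  show ?thesis using psd pY pX tr c1 c2 unfolding density_def cost_formula by simp
qed

definition nr :: "complex^'n::finite \<Rightarrow> real" where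
  "nr x = (\<Sum>i\<in>UNIV. (cmod (x $ i))^2)"

definition symc :: "('n::finite \<Rightarrow> complex^'n) \<Rightarrow> complex^('n\<times>'n)^('n\<times>'n)" where
  "symc w = (\<Sum>r\<in>UNIV. msc (complex_of_real (1 / nr (w r))) (out (kr (w r) (w r))))"

lemma nr_cnj: "(\<Sum>j\<in>UNIV. x $ j * cnj (x $ j)) = complex_of_real (nr x)"
  unfolding nr_def of_real_sum by (rule sum.cong[OF refl], rule complex_norm_square[symmetric])

lemma nr_zero: fixes x :: "complex^'n::finite" shows "nr x = 0 \<Longrightarrow> x $ i = 0"
  unfolding nr_def using sum_nonneg_eq_0_iff[of UNIV "\<lambda>i. (cmod (x $ i))^2"] by simp

lemma nr_cancel: fixes x :: "complex^'n::finite"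
  shows "complex_of_real (1 / nr x) * (x $ i * cnj (x $ k) * complex_of_real (nr x)) = x $ i * cnj (x $ k)"
proof (cases "nr x = 0")
  case True thus ?thesis using nr_zero[OF True] by simp
next
  case False thus ?thesis by (simp add: field_simps)
qed

lemma symc_entry: "symc w $ a $ b = (\<Sum>r\<in>UNIV. complex_of_real (1 / nr (w r)) *
   (w r $ fst a * w r $ snd a * cnj (w r $ fst b) * cnj (w r $ snd b)))"
  unfolding symc_def msc_def out_def kr_def by (simp add: mult_ac)

lemma symc_coupling:
  fixes P :: "complex^'n::finite^'n"
  assumes "density P" and w: "P = (\<Sum>r\<in>UNIV. out (w r))"
  shows "density (symc w) \<and> ptrace_Y (symc w) = P \<and> ptrace_X (symc w) = P
    \<and> Re (mtrace (symc w ** cost)) = 0"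
proof -
  have psd: "psd (symc w)" unfolding symc_def
    by (intro psd_sum psd_scale psd_out) (simp add: nr_def sum_nonneg)
  have pY: "ptrace_Y (symc w) = P"
    unfolding vec_eq_iff
  proof (intro allI)
    fix i k
    have "ptrace_Y (symc w) $ i $ k = (\<Sum>r\<in>UNIV. complex_of_real (1 / nr (w r)) *
        (w r $ i * cnj (w r $ k) * (\<Sum>j\<in>UNIV. w r $ j * cnj (w r $ j))))"
      unfolding ptrace_Y_def symc_entry by (subst sum.swap) (simp add: sum_distrib_left mult_ac)
    also have "\<dots> = (\<Sum>r\<in>UNIV. w r $ i * cnj (w r $ k))"
      unfolding nr_cnj nr_cancel ..
    also have "\<dots> = P $ i $ k" unfolding w out_def by simp
    finally show "ptrace_Y (symc w) $ i $ k = P $ i $ k" .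
  qed
  have pX: "ptrace_X (symc w) = P"
    unfolding vec_eq_iff
  proof (intro allI)
    fix i k
    have "ptrace_X (symc w) $ i $ k = (\<Sum>r\<in>UNIV. complex_of_real (1 / nr (w r)) *
        (w r $ i * cnj (w r $ k) * (\<Sum>j\<in>UNIV. w r $ j * cnj (w r $ j))))"
      unfolding ptrace_X_def symc_entry by (subst sum.swap) (simp add: sum_distrib_left mult_ac)
    also have "\<dots> = (\<Sum>r\<in>UNIV. w r $ i * cnj (w r $ k))"
      unfolding nr_cnj nr_cancel ..
    also have "\<dots> = P $ i $ k" unfolding w out_def by simp
    finally show "ptrace_X (symc w) $ i $ k = P $ i $ k" .
  qed
  have tr: "mtrace (symc w) = 1" unfolding mtrace_ptrace pY using assms density_def by blast
  have "symc w $ a $ sw a = symc w $ a $ a" for a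
    unfolding symc_entry sw_def by (simp add: mult_ac)
  hence "mtrace (symc w ** cost) = 0" unfolding cost_formula by simp
  thus ?thesis using psd pY pX tr unfolding density_def by simp
qed

lemma qW_set_sym:
  fixes P Q :: "complex^'n::finite^'n"
  shows "{Re (mtrace (\<pi> ** cost)) | \<pi>. density \<pi> \<and> ptrace_Y \<pi> = P \<and> ptrace_X \<pi> = Q}
      \<subseteq> {Re (mtrace (\<pi> ** cost)) | \<pi>. density \<pi> \<and> ptrace_Y \<pi> = Q \<and> ptrace_X \<pi> = P}"
proof
  fix x assume "x \<in> {Re (mtrace (\<pi> ** cost)) | \<pi>. density \<pi> \<and> ptrace_Y \<pi> = P \<and> ptrace_X \<pi> = Q}"
  then obtain \<pi> where h: "x = Re (mtrace (\<pi> ** cost))" "density \<pi>" "ptrace_Y \<pi> = P" "ptrace_X \<pi> = Q"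
    unfolding mem_Collect_eq by blast
  have c: "density (swp \<pi>) \<and> ptrace_Y (swp \<pi>) = Q \<and> ptrace_X (swp \<pi>) = P
    \<and> mtrace (swp \<pi> ** cost) = mtrace (\<pi> ** cost)" using swp_coupling[OF h(2)] h(3,4) by simp
  show "x \<in> {Re (mtrace (\<pi> ** cost)) | \<pi>. density \<pi> \<and> ptrace_Y \<pi> = Q \<and> ptrace_X \<pi> = P}"
    unfolding mem_Collect_eq by (rule exI[of _ "swp \<pi>"]) (use c h(1) in simp)
qed

theorem theorem1:
  fixes P Q :: "complex^'n^'n"
  assumes "density P" and "density Q"
  shows "qW P Q \<ge> 0 \<and> qW P Q = qW Q P \<and> (qW P Q = 0 \<longleftrightarrow> P = Q)"
proof -
  define S where "S = {Re (mtrace (\<pi> ** cost)) | \<pi>. density \<pi> \<and> ptrace_Y \<pi> = P \<and> ptrace_X \<pi> = Q}"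
  have qS: "qW P Q = Inf S" unfolding qW_def S_def ..
  have ne: "S \<noteq> {}" unfolding S_def using prodc_coupling[OF assms] by blast
  have lb: "\<And>x. x \<in> S \<Longrightarrow> 0 \<le> x" unfolding S_def density_def using cost_nonneg by blast
  have bdd: "bdd_below S" using lb by (rule bdd_belowI)
  have nonneg: "0 \<le> qW P Q" unfolding qS using ne lb by (rule cInf_greatest)
  have sym: "qW P Q = qW Q P"
    unfolding qW_def using qW_set_sym[of P Q] qW_set_sym[of Q P] by (simp add: subset_antisym)
  have fwd: "P = Q" if z: "qW P Q = 0"
  proof (rule ccontr)
    assume "P \<noteq> Q"
    then obtain i k where ik: "P $ i $ k \<noteq> Q $ i $ k" by (metis vec_eq_iff)
    define c where "c = cmod (P $ i $ k - Q $ i $ k)"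
    have c0: "c > 0" unfolding c_def using ik by simp
    define n where "n = real CARD('n)"
    have n0: "n > 0" unfolding n_def by simp
    define \<delta> where "\<delta> = (c / (8 * n))^2"
    have d0: "\<delta> > 0" unfolding \<delta>_def using c0 n0 by simp
    have "Inf S < \<delta>" using z d0 qS by simp
    then obtain x where "x \<in> S" "x < \<delta>" using cInf_lessD[OF ne] by blast
    then obtain \<pi> where \<pi>: "density \<pi>" "ptrace_Y \<pi> = P" "ptrace_X \<pi> = Q" and xl: "Re (mtrace (\<pi> ** cost)) < \<delta>"
      unfolding S_def by blast
    have "c \<le> 4 * n * sqrt (Re (mtrace (\<pi> ** cost)))"
      using entry_bound[OF \<pi>(1), of i k] unfolding \<pi>(2,3) c_def n_def .
    also have "\<dots> < 4 * n * sqrt \<delta>"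
      using xl n0 by simp
    also have "sqrt \<delta> = c / (8 * n)" unfolding \<delta>_def using c0 n0 by simp
    also have "4 * n * (c / (8 * n)) = c / 2" using n0 by (simp add: field_simps)
    finally show False using c0 by simp
  qed
  have bwd: "qW P Q = 0" if e: "P = Q"
  proof -
    have pp: "psd P" using assms density_def by blast
    obtain w where w: "P = (\<Sum>r::'n\<in>UNIV. out (w r))" using decomp[OF pp] by blast
    have "0 \<in> S" unfolding S_def e using symc_coupling[OF assms(1) w] e by force
    thus ?thesis unfolding qS using lb by (rule cInf_eq_minimum)
  qed
  show ?thesis using nonneg sym fwd bwd by blast
qed

end
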